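(* Let $A_1,B_1,A_2,B_2\in\mathrm{SL}_2(\mathbb C)$ with $[A_1,B_1][A_2,B_2]=I$, where $[X,Y]=XYX^{-1}Y^{-1}$. Assume there exists $M\in\mathrm{SL}_2(\mathbb C)$ with $$MA_1M^{-1}=A_2,\qquad MB_1M^{-1}=B_2,\qquad M^2=-I.$$ Set $A=A_1$, $B=B_1$, $C_1=M$, $C_2=M^{-1}[A_1,B_1]$. Then $[A,B]=C_1C_2$, $\mathrm{trace}(C_1)=\mathrm{trace}(C_2)=0$, and $(A_1,B_1,A_2,B_2)=(A,\,B,\,C_1^{-1}AC_1,\,C_1^{-1}BC_1)$, i.e. $(A_1,B_1,A_2,B_2)=\pi^*(A,B,C_1,C_2)$. If moreover $\mathrm{trace}[A_1,B_1]\neq2$, then $(A_1,B_1,A_2,B_2)$ comes from a representation of the $5$-punctured sphere: up to simultaneous conjugation, there exist $M_0,M_1,M_t,M_\lambda,M_\infty\in\mathrm{SL}_2(\mathbb C)$ with $M_0M_1M_tM_\lambda M_\infty=I$ and all five of trace $0$, such that $A_1=M_1M_tM_\lambda$, $B_1=M_\lambda M_\infty$, $A_2=M_t^{-1}A_1M_t$, $B_2=M_t^{-1}B_1M_t$.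
   Context: Representation spaces: $\tilde{\mathcal R}_{1/2}$ is the set of $(A,B,C_1,C_2)\in\mathrm{SL}_2(\mathbb C)^4$ with $[A,B]=C_1C_2$ and $\mathrm{trace}(C_1)=\mathrm{trace}(C_2)=0$, modulo simultaneous conjugation (monodromy of connections on an elliptic curve with two poles of exponent $\frac12$); $\mathcal R'$ is the set of $(A_1,B_1,A_2,B_2)\in\mathrm{SL}_2(\mathbb C)^4$ with $[A_1,B_1][A_2,B_2]=I$ modulo simultaneous conjugation (monodromy of genus $2$ curves). The map $\pi^*:\tilde{\mathcal R}_{1/2}\to\mathcal R'$, induced by the double cover of the elliptic curve branched at the two poles, is $\pi^*(A,B,C_1,C_2)=(A,B,C_1^{-1}AC_1,C_1^{-1}BC_1)$. A representation of the $5$-punctured sphere with all exponents $\frac12$ is a quintuple $(M_0,M_1,M_t,M_\lambda,M_\infty)$ of traceless matrices in $\mathrm{SL}_2(\mathbb C)$ with product $I$; it is sent into $\tilde{\mathcal R}_{1/2}$ and then by $\pi^*$ into $\mathcal R'$ via the formulas in the claim. *)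

theory Defs
  imports "HOL-Analysis.Analysis"
begin

type_synonym mat2 = "complex^2^2"

definition SL2 :: "mat2 set" where
  "SL2 = {X. det X = 1}"

definition comm :: "mat2 \<Rightarrow> mat2 \<Rightarrow> mat2" where
  "comm X Y = X ** Y ** matrix_inv X ** matrix_inv Y"

text \<open>The map pi^* from the elliptic two-pole representation space to genus 2.\<close>
definition pi_star :: "mat2 \<Rightarrow> mat2 \<Rightarrow> mat2 \<Rightarrow> mat2 \<Rightarrow> mat2 \<times> mat2 \<times> mat2 \<times> mat2" where
  "pi_star A B C1 C2 = (A, B, matrix_inv C1 ** A ** C1, matrix_inv C1 ** B ** C1)"

end

theory Submission
  imports Defs
begin

definition adj2 :: "mat2 \<Rightarrow> mat2" where
 "adj2 X = (\<chi> i j. if i = 1 then (if j = 1 then X$2$2 else - X$1$2) else (if j = 1 then - X$2$1 else X$1$1))"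

lemma adj2_nth[simp]: "adj2 X $1$1 = X$2$2" "adj2 X $1$2 = - X$1$2" "adj2 X $2$1 = - X$2$1" "adj2 X $2$2 = X$1$1"
  by (simp_all add: adj2_def)

lemma mat2_eq_iff: "(X::mat2) = Y \<longleftrightarrow> X$1$1 = Y$1$1 \<and> X$1$2 = Y$1$2 \<and> X$2$1 = Y$2$1 \<and> X$2$2 = Y$2$2"
  by (simp add: vec_eq_iff forall_2)

lemma mult2: "((X::mat2) ** Y)$i$j = X$i$1*Y$1$j + X$i$2*Y$2$j"
  by (simp add: matrix_matrix_mult_def sum_2)

lemma mat2_nth[simp]: "(mat c :: mat2)$1$1 = c" "(mat c :: mat2)$1$2 = 0" "(mat c :: mat2)$2$1 = 0" "(mat c :: mat2)$2$2 = c"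
  by (simp_all add: mat_def)

lemma trace2: "trace (X::mat2) = X$1$1 + X$2$2" by (simp add: trace_def sum_2)

lemmas E = mat2_eq_iff mult2 trace2 det_2

lemma adjinv0: "(X::mat2) ** adj2 X = mat (det X) \<and> adj2 X ** X = mat (det X)"
  by (simp add: mat2_eq_iff mult2 det_2 algebra_simps)

lemma adjinv: assumes "det (X::mat2) = 1" shows "X ** adj2 X = mat 1 \<and> adj2 X ** X = mat 1"
  using adjinv0[of X] assms by simp

lemma inv2: assumes "det (X::mat2) = 1" shows "matrix_inv X = adj2 X"
proof -
  have h: "X ** adj2 X = mat 1 \<and> adj2 X ** X = mat 1" using adjinv[OF assms] .
  have h2: "X ** matrix_inv X = mat 1 \<and> matrix_inv X ** X = mat 1"
    unfolding matrix_inv_def by (rule someI[of _ "adj2 X"], rule h)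
  show ?thesis by (metis h h2 matrix_mul_assoc matrix_mul_lid matrix_mul_rid)
qed

lemma det_adj: "det (adj2 X) = det X" by (simp add: det_2 algebra_simps)
lemma adj_adj: "adj2 (adj2 X) = X" by (simp add: mat2_eq_iff)
lemma adj_mult: "adj2 (X ** Y) = adj2 Y ** adj2 X" by (simp add: mat2_eq_iff mult2 algebra_simps)
lemma adj_one: "adj2 (mat 1) = mat 1" by (simp add: mat2_eq_iff)

lemma inv_r[simp]: "det (X::mat2) = 1 \<Longrightarrow> X ** matrix_inv X = mat 1"
  using adjinv inv2 by metis
lemma inv_l[simp]: "det (X::mat2) = 1 \<Longrightarrow> matrix_inv X ** X = mat 1"
  using adjinv inv2 by metis
lemma cancel1[simp]: "det (X::mat2) = 1 \<Longrightarrow> matrix_inv X ** (X ** Y) = Y"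
  by (metis inv_l matrix_mul_assoc matrix_mul_lid)
lemma cancel2[simp]: "det (X::mat2) = 1 \<Longrightarrow> X ** (matrix_inv X ** Y) = Y"
  by (metis inv_r matrix_mul_assoc matrix_mul_lid)
lemma det_inv[simp]: "det (X::mat2) = 1 \<Longrightarrow> det (matrix_inv X) = 1"
  by (metis inv2 det_adj)
lemma inv_inv[simp]: "det (X::mat2) = 1 \<Longrightarrow> matrix_inv (matrix_inv X) = X"
  by (metis inv2 det_adj adj_adj)
lemma inv_mult[simp]: "det (X::mat2) = 1 \<Longrightarrow> det Y = 1 \<Longrightarrow> matrix_inv (X ** Y) = matrix_inv Y ** matrix_inv X"
proof -
  assume a: "det X = 1" "det Y = 1"
  hence "det (X ** Y) = 1" by (simp add: det_mul)
  thus ?thesis using a by (simp add: inv2 adj_mult)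
qed
lemma inv_one[simp]: "matrix_inv (mat 1 :: mat2) = mat 1"
  by (metis inv2 adj_one det_I)
lemma neg_l[simp]: "(- (X::mat2)) ** (Y::mat2) = - (X ** Y)" by (simp add: E)
lemma neg_r[simp]: "(X::mat2) ** (- (Y::mat2)) = - (X ** Y)" by (simp add: E)
lemma det_neg[simp]: "det (- (X::mat2)) = det X" by (simp add: det_2)

lemma tr0: assumes "det (X::mat2) = 1" "X ** X = - mat 1" shows "trace X = 0"
proof -
  have h1: "adj2 X ** X = mat 1" using adjinv[OF assms(1)] by simp
  have h2: "X ** (- X) = mat 1" using assms(2) by simp
  have "- X = (adj2 X ** X) ** (- X)" using h1 by simp
  also have "\<dots> = adj2 X ** (X ** (- X))" by (simp only: matrix_mul_assoc)
  also have "\<dots> = adj2 X" using h2 by simp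
  finally have "adj2 X = - X" by simp
  hence "adj2 X $1$1 = (- X)$1$1" by simp
  hence "X$2$2 = - X$1$1" by simp
  thus ?thesis by (simp add: trace2)
qed

lemma adj_tr0: assumes "trace X = 0" shows "adj2 X = - X"
proof -
  have d: "X$2$2 = - X$1$1" using assms unfolding trace2 add_eq_0_iff .
  show ?thesis using d by (simp add: mat2_eq_iff)
qed

lemma inv_neg: "det (X::mat2) = 1 \<Longrightarrow> trace X = 0 \<Longrightarrow> matrix_inv X = - X"
  by (simp add: inv2 adj_tr0)

lemma detN0: "det ((A::mat2) ** B - B ** A) = 2 * det A * det B - trace (A ** B ** adj2 A ** adj2 B)"
  by (simp add: E) algebra
lemma detN: "det (A::mat2) = 1 \<Longrightarrow> det B = 1 \<Longrightarrow> det (A ** B - B ** A) = 2 - trace (A ** B ** adj2 A ** adj2 B)"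
  using detN0[of A B] by simp

lemma keyid0: "trace ((A::mat2) ** (A ** B - B ** A) ** adj2 B ** M) = trace (M ** (A ** B ** adj2 A ** adj2 B)) - det A * det B * trace M"
  by (simp add: E) algebra
lemma keyid: "det (A::mat2) = 1 \<Longrightarrow> det B = 1 \<Longrightarrow> trace (A ** (A ** B - B ** A) ** adj2 B ** M) = trace (M ** (A ** B ** adj2 A ** adj2 B)) - trace M"
  using keyid0[of A B M] by simp

lemma trace_scal: "trace (mat c ** (X::mat2)) = c * trace X" by (simp add: E algebra_simps)
lemma trace_scal2: "trace ((A::mat2) ** (mat c ** (X::mat2)) ** (B::mat2) ** (C::mat2)) = c * trace (A ** X ** B ** C)" by (simp add: E algebra_simps)
lemma det_scal: "det (mat c ** (X::mat2)) = c^2 * det X" by (simp add: E algebra_simps power2_eq_square)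
lemma t0id: "trace ((- (mat c ** ((A::mat2) ** (B::mat2) - B ** A))) ** adj2 (A::mat2)) = 0" by (simp add: E algebra_simps)
lemma tlid: "trace ((B::mat2) ** (- (mat c ** ((A::mat2) ** B - B ** A)))) = 0" by (simp add: E algebra_simps)
lemma trneg: "trace (- (X::mat2)) = - trace X" by (simp add: trace2)


theorem mainTheorem4:
  fixes A1 B1 A2 B2 M :: mat2
  assumes "A1 \<in> SL2" "B1 \<in> SL2" "A2 \<in> SL2" "B2 \<in> SL2"
    and "comm A1 B1 ** comm A2 B2 = mat 1"
    and "M \<in> SL2"
    and "M ** A1 ** matrix_inv M = A2"
    and "M ** B1 ** matrix_inv M = B2"
    and "M ** M = - mat 1"
  shows "(let A = A1; B = B1; C1 = M; C2 = matrix_inv M ** comm A1 B1 in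
            C2 \<in> SL2 \<and> comm A B = C1 ** C2 \<and> trace C1 = 0 \<and> trace C2 = 0 \<and>
            (A1, B1, A2, B2) = (A, B, matrix_inv C1 ** A ** C1, matrix_inv C1 ** B ** C1) \<and>
            (A1, B1, A2, B2) = pi_star A B C1 C2)
       \<and> (trace (comm A1 B1) \<noteq> 2 \<longrightarrow>
           (\<exists>P M0 M1 Mt Ml Minf.
              P \<in> SL2 \<and> M0 \<in> SL2 \<and> M1 \<in> SL2 \<and> Mt \<in> SL2 \<and> Ml \<in> SL2 \<and> Minf \<in> SL2 \<and>
              M0 ** M1 ** Mt ** Ml ** Minf = mat 1 \<and>
              trace M0 = 0 \<and> trace M1 = 0 \<and> trace Mt = 0 \<and> trace Ml = 0 \<and> trace Minf = 0 \<and>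
              P ** A1 ** matrix_inv P = M1 ** Mt ** Ml \<and>
              P ** B1 ** matrix_inv P = Ml ** Minf \<and>
              P ** A2 ** matrix_inv P = matrix_inv Mt ** (P ** A1 ** matrix_inv P) ** Mt \<and>
              P ** B2 ** matrix_inv P = matrix_inv Mt ** (P ** B1 ** matrix_inv P) ** Mt))"
proof -
  have dA: "det A1 = 1" and dB: "det B1 = 1" and dM: "det M = 1"
    using assms by (auto simp: SL2_def)
  define K where "K = comm A1 B1"
  have dK: "det K = 1" using dA dB by (simp add: K_def comm_def det_mul)
  have trM: "trace M = 0" using tr0 dM assms(9) by blast
  have iM: "matrix_inv M = - M" using inv_neg dM trM by blast
  have c2: "comm A2 B2 = M ** K ** matrix_inv M"
    unfolding K_def comm_def assms(7)[symmetric] assms(8)[symmetric]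
    using dA dB dM by (simp add: det_mul matrix_mul_assoc[symmetric])
  have "K ** (M ** (K ** matrix_inv M)) = mat 1"
    using assms(5) c2 by (simp add: K_def matrix_mul_assoc)
  hence "(K ** (M ** (K ** matrix_inv M))) ** M = M" by simp
  hence KMK: "K ** (M ** K) = M" using dM by (simp add: matrix_mul_assoc[symmetric])
  have MKMK: "(M ** K) ** (M ** K) = - mat 1"
  proof -
    have "(M ** K) ** (M ** K) = M ** (K ** (M ** K))" by (simp add: matrix_mul_assoc)
    also have "\<dots> = - mat 1" using KMK assms(9) by simp
    finally show ?thesis .
  qed
  have dMK: "det (M ** K) = 1" using dM dK by (simp add: det_mul)
  have trMK: "trace (M ** K) = 0" using tr0[OF dMK MKMK] .
  have dC2: "det (matrix_inv M ** K) = 1" using dM dK by (simp add: det_mul)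
  have trC2: "trace (matrix_inv M ** K) = 0"
    using trMK iM by (simp add: trneg)
  have p1: "(let A = A1; B = B1; C1 = M; C2 = matrix_inv M ** comm A1 B1 in
            C2 \<in> SL2 \<and> comm A B = C1 ** C2 \<and> trace C1 = 0 \<and> trace C2 = 0 \<and>
            (A1, B1, A2, B2) = (A, B, matrix_inv C1 ** A ** C1, matrix_inv C1 ** B ** C1) \<and>
            (A1, B1, A2, B2) = pi_star A B C1 C2)"
  proof -
    have a2: "A2 = matrix_inv M ** A1 ** M" "B2 = matrix_inv M ** B1 ** M"
      using assms(7,8) iM by (simp_all add: matrix_mul_assoc)
    show ?thesis using dC2 trC2 trM a2 dM
      by (simp add: Let_def SL2_def K_def[symmetric] pi_star_def)
  qed
  have p2: "trace K \<noteq> 2 \<Longrightarrow> (\<exists>P M0 M1 Mt Ml Minf.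
              P \<in> SL2 \<and> M0 \<in> SL2 \<and> M1 \<in> SL2 \<and> Mt \<in> SL2 \<and> Ml \<in> SL2 \<and> Minf \<in> SL2 \<and>
              M0 ** M1 ** Mt ** Ml ** Minf = mat 1 \<and>
              trace M0 = 0 \<and> trace M1 = 0 \<and> trace Mt = 0 \<and> trace Ml = 0 \<and> trace Minf = 0 \<and>
              P ** A1 ** matrix_inv P = M1 ** Mt ** Ml \<and>
              P ** B1 ** matrix_inv P = Ml ** Minf \<and>
              P ** A2 ** matrix_inv P = matrix_inv Mt ** (P ** A1 ** matrix_inv P) ** Mt \<and>
              P ** B2 ** matrix_inv P = matrix_inv Mt ** (P ** B1 ** matrix_inv P) ** Mt)"
  proof -
    assume tK: "trace K \<noteq> 2"
    define N where "N = A1 ** B1 - B1 ** A1"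
    have KK: "K = A1 ** B1 ** adj2 A1 ** adj2 B1" using dA dB by (simp add: K_def comm_def inv2)
    have dN: "det N = 2 - trace K" unfolding N_def KK using detN dA dB by blast
    define s where "s = csqrt (det N)"
    have s2: "s^2 = det N" by (simp add: s_def)
    have sn: "s \<noteq> 0" using s2 dN tK by auto
    define Minf where "Minf = mat (1/s) ** N"
    have dMi: "det Minf = 1" using sn by (simp add: Minf_def det_scal s2[symmetric] field_simps)
    have trN: "trace N = 0" by (simp add: N_def E algebra_simps)
    have trMi: "trace Minf = 0" by (simp add: Minf_def trace_scal trN)
    have iMi: "matrix_inv Minf = - Minf" using inv_neg dMi trMi by blast
    define Ml where "Ml = B1 ** matrix_inv Minf"
    define Mt where "Mt = matrix_inv M"
    define M1 where "M1 = A1 ** Minf ** matrix_inv B1 ** M"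
    define M0 where "M0 = matrix_inv Minf ** matrix_inv A1"
    have t0: "trace M0 = 0" unfolding M0_def iMi unfolding inv2[OF dA] Minf_def N_def by (rule t0id)
    have tl: "trace Ml = 0" unfolding Ml_def iMi unfolding Minf_def N_def by (rule tlid)
    have tt: "trace Mt = 0" unfolding Mt_def iM using trM by (simp add: trneg)
    have z: "trace (A1 ** N ** adj2 B1 ** M) = 0"
      unfolding N_def using keyid[OF dA dB, of M] trMK trM by (simp add: KK)
    have t1: "trace M1 = 0" unfolding M1_def Minf_def inv2[OF dB] trace_scal2 using z by simp
    have prod: "M0 ** M1 ** Mt ** Ml ** Minf = mat 1"
      unfolding M0_def M1_def Mt_def Ml_def using dA dB dM dMi
      by (simp add: matrix_mul_assoc[symmetric])
    have e1: "A1 = M1 ** Mt ** Ml"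
      unfolding M1_def Mt_def Ml_def using dA dB dM dMi
      by (simp add: matrix_mul_assoc[symmetric])
    have e2: "B1 = Ml ** Minf"
      unfolding Ml_def using dMi by (simp add: matrix_mul_assoc[symmetric])
    have e3: "A2 = matrix_inv Mt ** A1 ** Mt" "B2 = matrix_inv Mt ** B1 ** Mt"
      unfolding Mt_def using assms(7,8) dM by simp_all
    have sl: "mat 1 \<in> SL2" "M0 \<in> SL2" "M1 \<in> SL2" "Mt \<in> SL2" "Ml \<in> SL2" "Minf \<in> SL2"
      unfolding SL2_def M0_def M1_def Mt_def Ml_def using dA dB dM dMi
      by (simp_all add: det_mul)
    show ?thesis
      apply (rule exI[of _ "mat 1"], rule exI[of _ M0], rule exI[of _ M1], rule exI[of _ Mt],
             rule exI[of _ Ml], rule exI[of _ Minf])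
      using sl prod t0 t1 tt tl trMi e1 e2 e3 by simp
  qed
  show ?thesis using p1 p2 by (simp only: K_def[symmetric]) blast
qed

end
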